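(* Let $L>0$ and let $\phi$ satisfy (H_φ) with $\phi(0)=+\infty$. Let $u\in H^1_0(0,L)$ with $\phi(u)\in L^2(0,L)$. If $\int_0^{\delta}\phi(t)\,dt=+\infty$ for every $\delta\in(0,1)$, then $u(x)\le0$ for all $x\in[0,L]$. If $\int_{-\delta}^0\phi(t)\,dt=+\infty$ for every $\delta\in(0,1)$, then $u(x)\ge0$ for all $x\in[0,L]$.
   Context: (H_φ): $\phi:\mathbb{R}\to\mathbb{R}\cup\{+\infty\}$ is continuous when $\mathbb{R}\cup\{+\infty\}$ carries its usual topology, and $\phi(s)<+\infty$ for every $s\neq0$. Functions in $H^1_0(0,L)$ are identified with their continuous representatives. *)

theory Defs
  imports "HOL-Analysis.Analysis"
begin

text \<open>(H_phi): phi : R -> R \<union> {+infinity}, modelled as an extended-real valued function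
  never taking the value -infinity; continuity w.r.t. the order topology of ereal
  restricted to R \<union> {+infinity} is exactly the usual topology.\<close>
definition H_phi :: "(real \<Rightarrow> ereal) \<Rightarrow> bool" where
  "H_phi \<phi> \<longleftrightarrow> continuous_on UNIV \<phi> \<and> (\<forall>s. \<phi> s \<noteq> -\<infinity>) \<and> (\<forall>s. s \<noteq> 0 \<longrightarrow> \<phi> s < \<infinity>)"

definition L2_on :: "real \<Rightarrow> (real \<Rightarrow> real) \<Rightarrow> bool" where
  "L2_on L f \<longleftrightarrow> set_borel_measurable lborel {0<..<L} f
      \<and> set_integrable lborel {0<..<L} (\<lambda>x. (f x)\<^sup>2)"

definition C1c_test :: "real \<Rightarrow> (real \<Rightarrow> real) \<Rightarrow> (real \<Rightarrow> real) \<Rightarrow> bool" where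
  "C1c_test L \<psi> \<psi>' \<longleftrightarrow> (\<forall>x. (\<psi> has_real_derivative \<psi>' x) (at x)) \<and> continuous_on UNIV \<psi>'
      \<and> (\<exists>a b. 0 < a \<and> a \<le> b \<and> b < L \<and> (\<forall>x. x \<notin> {a..b} \<longrightarrow> \<psi> x = 0))"

text \<open>H^1(0,L): u \<in> L^2 with a weak derivative g \<in> L^2 (Brezis, Def. 8.1, test
  functions in C^1_c). H^1_0(0,L): additionally, the continuous representative (which
  we take u itself to be on [0,L]) vanishes at 0 and L.\<close>
definition H1_on :: "real \<Rightarrow> (real \<Rightarrow> real) \<Rightarrow> bool" where
  "H1_on L u \<longleftrightarrow> L2_on L u \<and> (\<exists>g. L2_on L g \<and>
      (\<forall>\<psi> \<psi>'. C1c_test L \<psi> \<psi>' \<longrightarrow>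
         (LINT x:{0<..<L}|lborel. u x * \<psi>' x) = - (LINT x:{0<..<L}|lborel. g x * \<psi> x)))"

definition H1_0 :: "real \<Rightarrow> (real \<Rightarrow> real) \<Rightarrow> bool" where
  "H1_0 L u \<longleftrightarrow> H1_on L u \<and> continuous_on {0..L} u \<and> u 0 = 0 \<and> u L = 0"

definition comp_L2 :: "real \<Rightarrow> (real \<Rightarrow> ereal) \<Rightarrow> (real \<Rightarrow> real) \<Rightarrow> bool" where
  "comp_L2 L \<phi> u \<longleftrightarrow> (AE x in lborel. x \<in> {0<..<L} \<longrightarrow> \<phi> (u x) \<noteq> \<infinity>)
      \<and> L2_on L (\<lambda>x. real_of_ereal (\<phi> (u x)))"

end

theory Submission
  imports Defs
begin


definition bump :: "real \<Rightarrow> real \<Rightarrow> real \<Rightarrow> real" where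
  "bump a b s = max 0 ((s - a) * (b - s))"

lemma bump_cont: "continuous_on S (bump a b)"
  unfolding bump_def by (intro continuous_intros)

lemma bump_nonneg: "bump a b s \<ge> 0"
  unfolding bump_def by simp

lemma bump_zero: "a \<le> b \<Longrightarrow> s \<notin> {a<..<b} \<Longrightarrow> bump a b s = 0"
proof -
  assume "a \<le> b" "s \<notin> {a<..<b}"
  then have "s \<le> a \<or> b \<le> s" by auto
  then have "(s - a) * (b - s) \<le> 0"
    using \<open>a \<le> b\<close> by (auto intro: mult_nonpos_nonneg mult_nonneg_nonpos)
  then show ?thesis unfolding bump_def by simp
qed

lemma bump_has_integral:
  assumes "a \<le> b"
  shows "(bump a b has_integral (b - a)^3/6) {a..b}"
proof -
  define F where "F s = (b-a)*(s-a)^2/2 - (s-a)^3/3" for s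
  have "((\<lambda>s. (s - a) * (b - s)) has_integral (F b - F a)) {a..b}"
  proof (rule fundamental_theorem_of_calculus[OF assms])
    fix x assume "x \<in> {a..b}"
    have "(F has_real_derivative ((x - a) * (b - x))) (at x)"
      unfolding F_def
      by (rule derivative_eq_intros refl | simp)+ (simp add: field_simps power2_eq_square)
    then show "(F has_vector_derivative (x - a) * (b - x)) (at x within {a..b})"
      by (simp add: has_real_derivative_iff_has_vector_derivative has_vector_derivative_at_within)
  qed
  moreover have "F b - F a = (b - a)^3/6" unfolding F_def by (simp add: power2_eq_square power3_eq_cube algebra_simps)
  ultimately have "((\<lambda>s. (s - a) * (b - s)) has_integral (b - a)^3/6) {a..b}" by simp
  then show ?thesis
    by (rule has_integral_eq[rotated]) (auto simp: bump_def)
qed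

lemma bump_integrable: "bump a b integrable_on {c..d}"
  by (rule integrable_continuous_interval[OF bump_cont])

lemma bump_int_left:
  assumes "a \<le> b" "t \<le> a"
  shows "integral {A..t} (bump a b) = 0"
proof -
  have "integral {A..t} (bump a b) = integral {A..t} (\<lambda>_. 0)"
    by (rule integral_cong) (use assms in \<open>auto intro!: bump_zero\<close>)
  then show ?thesis by simp
qed

lemma bump_int_right:
  assumes "a \<le> b" "A \<le> a" "b \<le> t"
  shows "integral {A..t} (bump a b) = (b - a)^3/6"
proof -
  have "(bump a b has_integral (b - a)^3/6) {A..t}"
    by (rule has_integral_on_superset[OF bump_has_integral[OF assms(1)]])
       (use assms in \<open>auto intro!: bump_zero\<close>)
  then show ?thesis by (rule integral_unique)
qed

lemma bump_int_bounds:
  assumes "a \<le> b" "A \<le> a"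
  shows "0 \<le> integral {A..t} (bump a b)" "integral {A..t} (bump a b) \<le> (b - a)^3/6"
proof -
  show "0 \<le> integral {A..t} (bump a b)"
    by (rule integral_nonneg[OF bump_integrable bump_nonneg])
  have "integral {A..t} (bump a b) \<le> integral {A..max t b} (bump a b)"
    by (rule integral_subset_le) (auto intro: bump_integrable bump_nonneg)
  also have "\<dots> = (b - a)^3/6" by (rule bump_int_right) (use assms in auto)
  finally show "integral {A..t} (bump a b) \<le> (b - a)^3/6" .
qed

lemma antideriv:
  fixes p :: "real \<Rightarrow> real"
  assumes "continuous_on UNIV p" "\<And>s. s \<le> A + 1 \<Longrightarrow> p s = 0"
  shows "((\<lambda>t. integral {A..t} p) has_real_derivative p t) (at t)"
proof (cases "t < A + 1")
  case True
  have z: "integral {A..s} p = 0" if "s < A + 1" for s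
  proof -
    have "integral {A..s} p = integral {A..s} (\<lambda>_. 0)"
      by (rule integral_cong) (use that assms(2) in auto)
    then show ?thesis by simp
  qed
  have "((\<lambda>_. 0::real) has_real_derivative 0) (at t)" by simp
  then have "((\<lambda>_. 0::real) has_real_derivative p t) (at t)" using assms(2) True by simp
  then show ?thesis
    by (rule has_field_derivative_transform_within_open[of _ _ _ "{..<A+1}"]) (use True z in auto)
next
  case False
  then have "A < t" "t < t + 1" by auto
  have "((\<lambda>x. integral {A..x} p) has_real_derivative p t) (at t within {A..t+1})"
    by (rule integral_has_real_derivative) (use assms(1) \<open>A < t\<close> in \<open>auto intro: continuous_on_subset\<close>)
  then show ?thesis using at_within_Icc_at[OF \<open>A < t\<close> \<open>t < t + 1\<close>] by simp
qed

lemma bump_avg: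
  fixes v :: "real \<Rightarrow> real"
  assumes "a \<le> b" "continuous_on {a..b} v" "\<And>s. s \<in> {a..b} \<Longrightarrow> \<bar>v s - v0\<bar> \<le> e"
  shows "\<bar>integral {a..b} (\<lambda>s. v s * bump a b s) - v0 * ((b - a)^3/6)\<bar> \<le> e * ((b - a)^3/6)"
proof -
  have i1: "(\<lambda>s. v s * bump a b s) integrable_on {a..b}"
    by (rule integrable_continuous_interval) (intro continuous_intros assms bump_cont)
  have i2: "(\<lambda>s. v0 * bump a b s) integrable_on {a..b}"
    by (rule integrable_continuous_interval) (intro continuous_intros assms bump_cont)
  have i3: "(\<lambda>s. e * bump a b s) integrable_on {a..b}"
    by (rule integrable_continuous_interval) (intro continuous_intros assms bump_cont)
  have K: "integral {a..b} (bump a b) = (b - a)^3/6"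
    using bump_has_integral[OF assms(1)] by (rule integral_unique)
  have "integral {a..b} (\<lambda>s. v s * bump a b s) - v0 * ((b - a)^3/6)
      = integral {a..b} (\<lambda>s. v s * bump a b s - v0 * bump a b s)"
    using K by (simp add: integral_diff[OF i1 i2])
  also have "\<bar>\<dots>\<bar> \<le> integral {a..b} (\<lambda>s. e * bump a b s)"
  proof (rule integral_norm_bound_integral[where f="\<lambda>s. v s * bump a b s - v0 * bump a b s", simplified])
    show "(\<lambda>s. v s * bump a b s - v0 * bump a b s) integrable_on {a..b}" using i1 i2 by (rule integrable_diff)
    show "(\<lambda>s. e * bump a b s) integrable_on {a..b}" by (rule i3)
    fix s assume "s \<in> {a..b}"
    have "\<bar>v s * bump a b s - v0 * bump a b s\<bar> = \<bar>v s - v0\<bar> * bump a b s"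
      using bump_nonneg[of a b s] by (simp add: abs_mult left_diff_distrib[symmetric])
    also have "\<dots> \<le> e * bump a b s"
      using assms(3)[OF \<open>s \<in> {a..b}\<close>] bump_nonneg[of a b s] by (rule mult_right_mono)
    finally show "\<bar>v s * bump a b s - v0 * bump a b s\<bar> \<le> e * bump a b s" .
  qed
  also have "\<dots> = e * ((b - a)^3/6)" using K by simp
  finally show ?thesis .
qed

lemma setmeas_mult:
  fixes f g :: "real \<Rightarrow> real"
  assumes "set_borel_measurable M A f" "set_borel_measurable M A g"
  shows "set_borel_measurable M A (\<lambda>x. f x * g x)"
proof -
  have "(\<lambda>x. indicator A x *\<^sub>R (f x * g x)) = (\<lambda>x. (indicator A x *\<^sub>R f x) * (indicator A x *\<^sub>R g x))"
    by (auto simp: indicator_def)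
  then show ?thesis using assms unfolding set_borel_measurable_def by simp
qed

lemma setint_cont:
  fixes F :: "real \<Rightarrow> real"
  assumes "continuous_on {0..L} F"
  shows "set_integrable lborel {0<..<L} F"
proof -
  have "set_integrable lborel {0..L} F"
    unfolding set_integrable_def by (rule borel_integrable_compact[OF compact_Icc assms])
  then show ?thesis by (rule set_integrable_subset) auto
qed

lemma L2_int:
  assumes "L2_on L f"
  shows "set_integrable lborel {0<..<L} f"
proof (rule set_integrable_bound[where f="\<lambda>x. (f x)^2 + 1"])
  have "set_integrable lborel {0<..<L} (\<lambda>x. 1::real)" by (rule setint_cont) simp
  then show "set_integrable lborel {0<..<L} (\<lambda>x. (f x)^2 + 1)"
    using assms unfolding L2_on_def by (intro set_integral_add) auto
  show "set_borel_measurable lborel {0<..<L} f" using assms unfolding L2_on_def by simp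
  have "\<bar>y\<bar> \<le> y^2 + 1" for y :: real
  proof -
    have "0 \<le> (\<bar>y\<bar> - 1)^2" by simp
    then have "2 * \<bar>y\<bar> \<le> \<bar>y\<bar>^2 + 1" by (simp add: power2_eq_square algebra_simps)
    then show ?thesis by simp
  qed
  then show "AE x in lborel. x \<in> {0<..<L} \<longrightarrow> norm (f x) \<le> norm ((f x)^2 + 1)"
    by (auto intro!: AE_I2 simp: abs_of_nonneg add_nonneg_nonneg)
qed

lemma L2_mult:
  assumes "L2_on L f" "L2_on L g"
  shows "set_integrable lborel {0<..<L} (\<lambda>x. f x * g x)"
proof (rule set_integrable_bound[where f="\<lambda>x. (f x)^2 + (g x)^2"])
  show "set_integrable lborel {0<..<L} (\<lambda>x. (f x)^2 + (g x)^2)"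
    using assms unfolding L2_on_def by (intro set_integral_add) auto
  show "set_borel_measurable lborel {0<..<L} (\<lambda>x. f x * g x)"
    using assms unfolding L2_on_def by (intro setmeas_mult) auto
  have "\<bar>y * z\<bar> \<le> y^2 + z^2" for y z :: real
  proof -
    have "0 \<le> (\<bar>y\<bar> - \<bar>z\<bar>)^2" by simp
    then have "2 * (\<bar>y\<bar> * \<bar>z\<bar>) \<le> \<bar>y\<bar>^2 + \<bar>z\<bar>^2" by (simp add: power2_eq_square algebra_simps)
    moreover have "0 \<le> \<bar>y\<bar> * \<bar>z\<bar>" by simp
    ultimately have "\<bar>y\<bar> * \<bar>z\<bar> \<le> y^2 + z^2" by (simp only: power2_abs)
    then show ?thesis by (simp add: abs_mult)
  qed
  then show "AE x in lborel. x \<in> {0<..<L} \<longrightarrow> norm (f x * g x) \<le> norm ((f x)^2 + (g x)^2)"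
    by (auto intro!: AE_I2)
qed

lemma setint_HK:
  fixes F :: "real \<Rightarrow> real"
  assumes "set_integrable lborel {0<..<L} F"
  shows "F integrable_on {0..L}" "(LINT x:{0<..<L}|lborel. F x) = integral {0..L} F"
  using set_borel_integral_eq_integral[OF assms] integrable_on_open_interval_real[of F 0 L]
    integral_open_interval_real[of 0 L F]
  by auto




lemma cont_pt:
  fixes F :: "real \<Rightarrow> real"
  assumes "continuous_on {0..L} F" "z \<in> {0..L}" "e > 0"
  obtains d where "d > 0" "\<And>s. s \<in> {0..L} \<Longrightarrow> \<bar>s - z\<bar> < d \<Longrightarrow> \<bar>F s - F z\<bar> < e"
  using assms unfolding continuous_on_iff dist_real_def by metis

lemma AC:
  fixes u g :: "real \<Rightarrow> real"
  assumes L: "L > 0" and uc: "continuous_on {0..L} u" and gL2: "L2_on L g"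
    and weak: "\<And>\<psi> \<psi>'. C1c_test L \<psi> \<psi>' \<Longrightarrow>
         (LINT x:{0<..<L}|lborel. u x * \<psi>' x) = - (LINT x:{0<..<L}|lborel. g x * \<psi> x)"
    and xy: "0 < x" "x < y" "y < L"
  shows "\<bar>u y - u x\<bar> \<le> integral {x..y} (\<lambda>s. \<bar>g s\<bar>)"
proof -
  have gi: "(\<lambda>s. \<bar>g s\<bar>) integrable_on {0..L}"
    using setint_HK(1)[OF set_integrable_abs[OF L2_int[OF gL2]]] .
  define G where "G t = integral {0..t} (\<lambda>s. \<bar>g s\<bar>)" for t
  have Gc: "continuous_on {0..L} G" unfolding G_def by (rule indefinite_integral_continuous_1[OF gi])
  have Gdiff: "integral {p..q} (\<lambda>s. \<bar>g s\<bar>) = G q - G p" if "0 \<le> p" "p \<le> q" "q \<le> L" for p q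
  proof -
    have "(\<lambda>s. \<bar>g s\<bar>) integrable_on {0..q}" by (rule integrable_on_subinterval[OF gi]) (use that in auto)
    from Henstock_Kurzweil_Integration.integral_combine[OF that(1,2) this] show ?thesis unfolding G_def by simp
  qed
  show ?thesis
  proof (rule field_le_epsilon)
    fix e0 :: real assume "e0 > 0"
    define e where "e = e0 / 4"
    have e: "e > 0" using \<open>e0 > 0\<close> by (simp add: e_def)
    have xL: "x \<in> {0..L}" "y \<in> {0..L}" using xy by auto
    obtain d1 where d1: "d1 > 0" "\<And>s. s \<in> {0..L} \<Longrightarrow> \<bar>s - x\<bar> < d1 \<Longrightarrow> \<bar>u s - u x\<bar> < e"
      using cont_pt[OF uc xL(1) e] by metis
    obtain d2 where d2: "d2 > 0" "\<And>s. s \<in> {0..L} \<Longrightarrow> \<bar>s - y\<bar> < d2 \<Longrightarrow> \<bar>u s - u y\<bar> < e"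
      using cont_pt[OF uc xL(2) e] by metis
    obtain d3 where d3: "d3 > 0" "\<And>s. s \<in> {0..L} \<Longrightarrow> \<bar>s - x\<bar> < d3 \<Longrightarrow> \<bar>G s - G x\<bar> < e"
      using cont_pt[OF Gc xL(1) e] by metis
    obtain d4 where d4: "d4 > 0" "\<And>s. s \<in> {0..L} \<Longrightarrow> \<bar>s - y\<bar> < d4 \<Longrightarrow> \<bar>G s - G y\<bar> < e"
      using cont_pt[OF Gc xL(2) e] by metis
    define m where "m = min (min (min d1 d2) (min d3 d4)) (min x (L - y))"
    have m: "m > 0" "m \<le> d1" "m \<le> d2" "m \<le> d3" "m \<le> d4" "m \<le> x" "m \<le> L - y"
      using d1 d2 d3 d4 xy unfolding m_def by auto
    define h where "h = m / 4"
    have h: "h > 0" "2*h < d1" "2*h < d2" "2*h < d3" "2*h < d4" "2*h < x" "y + 2*h < L"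
      using m unfolding h_def by auto
    define a where "a = x - 2*h"
    define b where "b = y + 2*h"
    have ab: "0 < a" "a < x" "y < b" "b < L" "a \<le> b" "x < y" "a < y" "x < b" using h xy unfolding a_def b_def by auto
    define K where "K = (2*h)^3/6"
    have K: "K > 0" "(x - a)^3/6 = K" "(b - y)^3/6 = K" using h unfolding K_def a_def b_def by auto
    define p where "p s = (1/K) * bump a x s - (1/K) * bump y b s" for s
    define \<psi> where "\<psi> t = integral {a-2..t} p" for t
    have pc: "continuous_on S p" for S unfolding p_def by (intro continuous_intros bump_cont)
    have bi: "(\<lambda>s. (1/K) * bump c d s) integrable_on {c'..d'}" for c d c' d'
      using integrable_on_cmult_left[OF bump_integrable, of "1/K" c d c' d'] by simp
    have \<psi>eq: "\<psi> t = (integral {a-2..t} (bump a x) - integral {a-2..t} (bump y b)) / K" for t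
    proof -
      have "integral {a-2..t} p = integral {a-2..t} (\<lambda>s. (1/K)*bump a x s) - integral {a-2..t} (\<lambda>s. (1/K)*bump y b s)"
        unfolding p_def by (rule integral_diff[OF bi bi])
      also have "\<dots> = (1/K) * integral {a-2..t} (bump a x) - (1/K) * integral {a-2..t} (bump y b)"
        by (simp only: integral_mult[OF bump_integrable])
      finally show ?thesis unfolding \<psi>_def by (simp add: diff_divide_distrib)
    qed
    have F1: "integral {a-2..t} (bump a x) = 0" if "t \<le> a" for t
      by (rule bump_int_left) (use ab that in auto)
    have F2: "integral {a-2..t} (bump a x) = K" if "x \<le> t" for t
      using bump_int_right[of a x "a-2" t] ab that K by auto
    have F3: "integral {a-2..t} (bump y b) = 0" if "t \<le> y" for t
      by (rule bump_int_left) (use ab that in auto)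
    have F4: "integral {a-2..t} (bump y b) = K" if "b \<le> t" for t
      using bump_int_right[of y b "a-2" t] ab that K xy by auto
    have F5: "0 \<le> integral {a-2..t} (bump a x)" "integral {a-2..t} (bump a x) \<le> K" for t
      using bump_int_bounds[of a x "a-2" t] ab K by auto
    have F6: "0 \<le> integral {a-2..t} (bump y b)" "integral {a-2..t} (bump y b) \<le> K" for t
      using bump_int_bounds[of y b "a-2" t] ab K xy by auto
    have \<psi>01: "0 \<le> \<psi> t \<and> \<psi> t \<le> 1" for t
    proof (cases "t \<le> y")
      case True
      then show ?thesis using F5[of t] F3[OF True] K unfolding \<psi>eq by auto
    next
      case False
      then show ?thesis using F6[of t] F2[of t] K xy unfolding \<psi>eq by auto
    qed
    have \<psi>0: "\<psi> t = 0" if "t \<notin> {a..b}" for t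
    proof (cases "t < a")
      case True
      then show ?thesis using F1[of t] F3[of t] ab xy unfolding \<psi>eq by auto
    next
      case False
      then have "b < t" using that by auto
      then show ?thesis using F2[of t] F4[of t] ab xy unfolding \<psi>eq by auto
    qed
    have test: "C1c_test L \<psi> p"
      unfolding C1c_test_def
    proof (intro conjI allI)
      fix t
      show "(\<psi> has_real_derivative p t) (at t)"
        unfolding \<psi>_def
      proof (rule antideriv[OF pc])
        fix s :: real assume "s \<le> a - 2 + 1"
        then have "bump a x s = 0" "bump y b s = 0" using ab xy by (auto intro!: bump_zero)
        then show "p s = 0" unfolding p_def by simp
      qed
      show "continuous_on UNIV p" by (rule pc)
      show "\<exists>a b. 0 < a \<and> a \<le> b \<and> b < L \<and> (\<forall>x. x \<notin> {a..b} \<longrightarrow> \<psi> x = 0)"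
        using ab xy \<psi>0 by (intro exI[of _ a] exI[of _ b]) auto
    qed
    have up_cont: "continuous_on {0..L} (\<lambda>s. u s * p s)" by (intro continuous_intros uc pc)
    have lhs: "(LINT s:{0<..<L}|lborel. u s * p s) = integral {0..L} (\<lambda>s. u s * p s)"
      by (rule setint_HK(2)[OF setint_cont[OF up_cont]])
    have \<psi>meas: "set_borel_measurable lborel {0<..<L} \<psi>"
    proof -
      have "continuous_on UNIV \<psi>"
        using test unfolding C1c_test_def
        by (meson DERIV_isCont continuous_at_imp_continuous_on)
      then have "\<psi> \<in> borel_measurable borel" by (rule borel_measurable_continuous_onI)
      then have "\<psi> \<in> borel_measurable lborel" by simp
      then show ?thesis unfolding set_borel_measurable_def
        by (intro borel_measurable_scaleR borel_measurable_indicator) auto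
    qed
    have gpsi: "set_integrable lborel {0<..<L} (\<lambda>s. g s * \<psi> s)"
    proof (rule set_integrable_bound[OF L2_int[OF gL2]])
      show "set_borel_measurable lborel {0<..<L} (\<lambda>s. g s * \<psi> s)"
        using gL2 \<psi>meas unfolding L2_on_def by (intro setmeas_mult) auto
      show "AE s in lborel. s \<in> {0<..<L} \<longrightarrow> norm (g s * \<psi> s) \<le> norm (g s)"
        using \<psi>01 by (auto intro!: AE_I2 simp: abs_mult intro: mult_left_le)
    qed
    have rhs: "(LINT s:{0<..<L}|lborel. g s * \<psi> s) = integral {0..L} (\<lambda>s. g s * \<psi> s)"
      by (rule setint_HK(2)[OF gpsi])
    have gpi: "(\<lambda>s. g s * \<psi> s) integrable_on {0..L}" by (rule setint_HK(1)[OF gpsi])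
    have main: "integral {0..L} (\<lambda>s. u s * p s) = - integral {0..L} (\<lambda>s. g s * \<psi> s)"
      using weak[OF test] lhs rhs by simp
    have gpab: "(\<lambda>s. g s * \<psi> s) integrable_on {a..b}"
      by (rule integrable_on_subinterval[OF gpi]) (use ab in auto)
    have "((\<lambda>s. g s * \<psi> s) has_integral integral {a..b} (\<lambda>s. g s * \<psi> s)) {0..L}"
      by (rule has_integral_on_superset[OF integrable_integral[OF gpab]]) (use ab \<psi>0 in auto)
    then have r1: "integral {0..L} (\<lambda>s. g s * \<psi> s) = integral {a..b} (\<lambda>s. g s * \<psi> s)"
      by (rule integral_unique)
    have "\<bar>integral {a..b} (\<lambda>s. g s * \<psi> s)\<bar> \<le> integral {a..b} (\<lambda>s. \<bar>g s\<bar>)"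
    proof (rule integral_norm_bound_integral[where f="\<lambda>s. g s * \<psi> s", simplified])
      show "(\<lambda>s. g s * \<psi> s) integrable_on {a..b}" by (rule gpab)
      show "(\<lambda>s. \<bar>g s\<bar>) integrable_on {a..b}" by (rule integrable_on_subinterval[OF gi]) (use ab in auto)
      fix s show "\<bar>g s * \<psi> s\<bar> \<le> \<bar>g s\<bar>" using \<psi>01[of s] by (auto simp: abs_mult intro: mult_left_le)
    qed
    also have "\<dots> = G b - G a" using ab by (intro Gdiff) auto
    also have "\<dots> = (G b - G y) + (G y - G x) + (G x - G a)" by simp
    also have "\<dots> \<le> e + integral {x..y} (\<lambda>s. \<bar>g s\<bar>) + e"
    proof -
      have "\<bar>G b - G y\<bar> < e" using d4(2)[of b] ab h xy unfolding b_def by auto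
      moreover have "\<bar>G a - G x\<bar> < e" using d3(2)[of a] ab h xy unfolding a_def by auto
      moreover have "G y - G x = integral {x..y} (\<lambda>s. \<bar>g s\<bar>)" using xy by (intro Gdiff[symmetric]) auto
      ultimately show ?thesis by linarith
    qed
    finally have R: "\<bar>integral {0..L} (\<lambda>s. u s * p s)\<bar> \<le> integral {x..y} (\<lambda>s. \<bar>g s\<bar>) + 2*e"
      using main r1 by simp
    have ub1: "continuous_on {0..L} (\<lambda>s. u s * bump a x s)" by (intro continuous_intros uc bump_cont)
    have ub2: "continuous_on {0..L} (\<lambda>s. u s * bump y b s)" by (intro continuous_intros uc bump_cont)
    have l1: "integral {0..L} (\<lambda>s. u s * bump a x s) = integral {a..x} (\<lambda>s. u s * bump a x s)"
    proof -
      have "(\<lambda>s. u s * bump a x s) integrable_on {a..x}"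
        by (rule integrable_continuous_interval) (rule continuous_on_subset[OF ub1], use ab xy in auto)
      then have "((\<lambda>s. u s * bump a x s) has_integral integral {a..x} (\<lambda>s. u s * bump a x s)) {0..L}"
        by (rule has_integral_on_superset[OF integrable_integral]) (use ab xy bump_zero[of a x] in auto)
      then show ?thesis by (rule integral_unique)
    qed
    have l2: "integral {0..L} (\<lambda>s. u s * bump y b s) = integral {y..b} (\<lambda>s. u s * bump y b s)"
    proof -
      have "(\<lambda>s. u s * bump y b s) integrable_on {y..b}"
        by (rule integrable_continuous_interval) (rule continuous_on_subset[OF ub2], use ab xy in auto)
      then have "((\<lambda>s. u s * bump y b s) has_integral integral {y..b} (\<lambda>s. u s * bump y b s)) {0..L}"
        by (rule has_integral_on_superset[OF integrable_integral]) (use ab xy bump_zero[of y b] in auto)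
      then show ?thesis by (rule integral_unique)
    qed
    have a1: "\<bar>integral {a..x} (\<lambda>s. u s * bump a x s) - u x * K\<bar> \<le> e * K"
      using bump_avg[of a x u "u x" e] K(2)
    proof -
      have "\<bar>integral {a..x} (\<lambda>s. u s * bump a x s) - u x * ((x - a)^3/6)\<bar> \<le> e * ((x - a)^3/6)"
      proof (rule bump_avg)
        show "a \<le> x" using ab by simp
        show "continuous_on {a..x} u" by (rule continuous_on_subset[OF uc]) (use ab xy in auto)
        fix s assume "s \<in> {a..x}"
        then show "\<bar>u s - u x\<bar> \<le> e" using d1(2)[of s] ab xy h unfolding a_def by auto
      qed
      then show ?thesis using K by simp
    qed
    have a2: "\<bar>integral {y..b} (\<lambda>s. u s * bump y b s) - u y * K\<bar> \<le> e * K"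
    proof -
      have "\<bar>integral {y..b} (\<lambda>s. u s * bump y b s) - u y * ((b - y)^3/6)\<bar> \<le> e * ((b - y)^3/6)"
      proof (rule bump_avg)
        show "y \<le> b" using ab by simp
        show "continuous_on {y..b} u" by (rule continuous_on_subset[OF uc]) (use ab xy in auto)
        fix s assume "s \<in> {y..b}"
        then show "\<bar>u s - u y\<bar> \<le> e" using d2(2)[of s] ab xy h unfolding b_def by auto
      qed
      then show ?thesis using K by simp
    qed
    have up: "integral {0..L} (\<lambda>s. u s * p s)
        = (integral {0..L} (\<lambda>s. u s * bump a x s) - integral {0..L} (\<lambda>s. u s * bump y b s)) / K"
    proof -
      have i1: "(\<lambda>s. (1/K) * (u s * bump a x s)) integrable_on {0..L}"
        using integrable_on_cmult_left[OF integrable_continuous_interval[OF ub1], of "1/K"] by simp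
      have i2: "(\<lambda>s. (1/K) * (u s * bump y b s)) integrable_on {0..L}"
        using integrable_on_cmult_left[OF integrable_continuous_interval[OF ub2], of "1/K"] by simp
      have "(\<lambda>s. u s * p s) = (\<lambda>s. (1/K) * (u s * bump a x s) - (1/K) * (u s * bump y b s))"
        unfolding p_def by (auto simp: algebra_simps)
      then show ?thesis using integral_diff[OF i1 i2] by (simp add: diff_divide_distrib)
    qed
    have L1: "\<bar>integral {0..L} (\<lambda>s. u s * p s) - (u x - u y)\<bar> \<le> 2 * e"
    proof -
      have "integral {0..L} (\<lambda>s. u s * p s) - (u x - u y)
         = ((integral {a..x} (\<lambda>s. u s * bump a x s) - u x * K) - (integral {y..b} (\<lambda>s. u s * bump y b s) - u y * K)) / K"
        using up l1 l2 K by (simp add: field_simps)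
      moreover have "\<bar>(integral {a..x} (\<lambda>s. u s * bump a x s) - u x * K) - (integral {y..b} (\<lambda>s. u s * bump y b s) - u y * K)\<bar> \<le> 2 * e * K"
        using a1 a2 by linarith
      ultimately show ?thesis using K by (simp add: abs_divide pos_divide_le_eq)
    qed
    show "\<bar>u y - u x\<bar> \<le> integral {x..y} (\<lambda>s. \<bar>g s\<bar>) + e0"
      using L1 R unfolding e_def by linarith
  qed
qed




lemma tau_lemma:
  fixes u :: "real \<Rightarrow> real"
  assumes uc: "continuous_on {0..x0} u" and x0: "0 \<le> x0" and u0: "u 0 = 0"
    and t: "0 < t" "t < u x0"
  defines "\<tau> \<equiv> Inf {z \<in> {0..x0}. u z = t}"
  shows "\<tau> \<in> {0..x0}" "u \<tau> = t" "\<And>z. 0 \<le> z \<Longrightarrow> z < \<tau> \<Longrightarrow> u z < t"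
    "\<And>z. z \<in> {0..x0} \<Longrightarrow> u z = t \<Longrightarrow> \<tau> \<le> z"
proof -
  let ?S = "{z \<in> {0..x0}. u z = t}"
  obtain z0 where "0 \<le> z0" "z0 \<le> x0" "u z0 = t" using IVT'[of u 0 t x0] uc x0 u0 t by auto
  then have ne: "?S \<noteq> {}" by auto
  have cl: "closed ?S" by (rule continuous_closed_preimage_constant[OF uc]) simp
  have bb: "bdd_below ?S" by (rule bdd_belowI[of _ 0]) auto
  have "\<tau> \<in> ?S" unfolding \<tau>_def by (rule closed_contains_Inf[OF ne bb cl])
  then show "\<tau> \<in> {0..x0}" "u \<tau> = t" by auto
  show low: "\<And>z. z \<in> {0..x0} \<Longrightarrow> u z = t \<Longrightarrow> \<tau> \<le> z"
    unfolding \<tau>_def by (rule cInf_lower) (use bb in auto)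
  fix z assume z: "0 \<le> z" "z < \<tau>"
  show "u z < t"
  proof (rule ccontr)
    assume "\<not> u z < t"
    then have "u 0 \<le> t" "t \<le> u z" using u0 t by auto
    moreover have "continuous_on {0..z} u"
      by (rule continuous_on_subset[OF uc]) (use z \<open>\<tau> \<in> {0..x0}\<close> in auto)
    ultimately obtain z' where "0 \<le> z'" "z' \<le> z" "u z' = t" using IVT'[of u 0 t z] z by auto
    then have "\<tau> \<le> z'" using low z \<open>\<tau> \<in> {0..x0}\<close> by auto
    then show False using z \<open>z' \<le> z\<close> by auto
  qed
qed

lemma p_lemma:
  fixes u :: "real \<Rightarrow> real"
  assumes uc: "continuous_on {0..x0} u" and x0: "0 \<le> x0" and u0: "u 0 = 0"
    and ab: "0 < a" "a < b" "b < u x0"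
  shows "\<exists>p. Inf {z \<in> {0..x0}. u z = a} \<le> p \<and> 0 < p \<and> p < Inf {z \<in> {0..x0}. u z = b} \<and> u p = a \<and>
      (\<forall>z. p \<le> z \<and> z \<le> Inf {z \<in> {0..x0}. u z = b} \<longrightarrow> a \<le> u z \<and> u z \<le> b)"
proof -
  define \<tau>a where "\<tau>a = Inf {z \<in> {0..x0}. u z = a}"
  define \<tau>b where "\<tau>b = Inf {z \<in> {0..x0}. u z = b}"
  note ta = tau_lemma[OF uc x0 u0, of a, folded \<tau>a_def]
  note tb = tau_lemma[OF uc x0 u0, of b, folded \<tau>b_def]
  have tb1: "\<tau>b \<in> {0..x0}" "u \<tau>b = b" using tb ab by auto
  have tb3: "\<And>z. 0 \<le> z \<Longrightarrow> z < \<tau>b \<Longrightarrow> u z < b" using tb(3) ab by auto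
  have ta4: "\<And>z. z \<in> {0..x0} \<Longrightarrow> u z = a \<Longrightarrow> \<tau>a \<le> z" using ta(4) ab by auto
  let ?P = "{z \<in> {0..\<tau>b}. u z = a}"
  have ucb: "continuous_on {0..\<tau>b} u" by (rule continuous_on_subset[OF uc]) (use tb1 in auto)
  obtain z0 where "0 \<le> z0" "z0 \<le> \<tau>b" "u z0 = a" using IVT'[of u 0 a \<tau>b] ucb tb1 u0 ab by auto
  then have ne: "?P \<noteq> {}" by auto
  have cl: "closed ?P" by (rule continuous_closed_preimage_constant[OF ucb]) simp
  have bb: "bdd_above ?P" by (rule bdd_aboveI[of _ \<tau>b]) auto
  define p where "p = Sup ?P"
  have "p \<in> ?P" unfolding p_def by (rule closed_contains_Sup[OF ne bb cl])
  then have p: "0 \<le> p" "p \<le> \<tau>b" "u p = a" by auto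
  have up: "\<And>z. z \<in> ?P \<Longrightarrow> z \<le> p" unfolding p_def by (rule cSup_upper) (use bb in auto)
  have "p \<noteq> \<tau>b" using p tb1 ab by auto
  then have plt: "p < \<tau>b" using p by auto
  have "p \<noteq> 0" using p u0 ab by auto
  then have ppos: "0 < p" using p by auto
  have "\<tau>a \<le> p" using ta4[of p] p tb1 by auto
  moreover have "a \<le> u z \<and> u z \<le> b" if z: "p \<le> z" "z \<le> \<tau>b" for z
  proof
    show "u z \<le> b"
    proof (cases "z = \<tau>b")
      case True then show ?thesis using tb1 by simp
    next
      case False then show ?thesis using tb3[of z] z p by auto
    qed
    show "a \<le> u z"
    proof (rule ccontr)
      assume "\<not> a \<le> u z"
      then have "u z \<le> a" "a \<le> u \<tau>b" using tb1 ab by auto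
      moreover have "continuous_on {z..\<tau>b} u"
        by (rule continuous_on_subset[OF ucb]) (use z p in auto)
      ultimately obtain z' where "z \<le> z'" "z' \<le> \<tau>b" "u z' = a" using IVT'[of u z a \<tau>b] z by auto
      then have "z' \<le> p" using up[of z'] z p by auto
      then have "z = p" using \<open>z \<le> z'\<close> z by auto
      then show False using p \<open>\<not> a \<le> u z\<close> by auto
    qed
  qed
  ultimately show ?thesis unfolding \<tau>a_def[symmetric] \<tau>b_def[symmetric]
    using ppos plt p by blast
qed




lemma core:
  fixes f u g :: "real \<Rightarrow> real"
  assumes L: "L > 0" and uc: "continuous_on {0..L} u" and u0: "u 0 = 0" and uL: "u L = 0"
    and AC: "\<And>x y. 0 < x \<Longrightarrow> x < y \<Longrightarrow> y < L \<Longrightarrow> u y - u x \<le> integral {x..y} (\<lambda>s. \<bar>g s\<bar>)"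
    and gi: "(\<lambda>s. \<bar>g s\<bar>) integrable_on {0..L}"
    and wi: "(\<lambda>s. \<bar>f (u s)\<bar> * \<bar>g s\<bar>) integrable_on {0..L}"
    and fc: "continuous_on {0<..} f"
    and f1: "\<exists>c>0. \<forall>t. 0 < t \<and> t \<le> c \<longrightarrow> 1 \<le> f t"
    and dv: "\<forall>\<delta>\<in>{0<..<1}. filterlim (\<lambda>\<epsilon>. integral {\<epsilon>..\<delta>} f) at_top (at_right 0)"
    and x0: "x0 \<in> {0..L}"
  shows "u x0 \<le> 0"
proof (rule ccontr)
  assume "\<not> u x0 \<le> 0"
  then have ux0: "u x0 > 0" by simp
  then have x0L: "0 < x0" "x0 < L" using x0 u0 uL by (auto simp: less_le)
  obtain c0 where c0: "c0 > 0" "\<forall>t. 0 < t \<and> t \<le> c0 \<longrightarrow> 1 \<le> f t" using f1 by blast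
  define c where "c = min c0 (min (1/2) (u x0 / 2))"
  have c: "0 < c" "c < 1" "c < u x0" "\<And>t. 0 < t \<Longrightarrow> t \<le> c \<Longrightarrow> 1 \<le> f t"
    using c0 ux0 unfolding c_def by auto
  define w where "w s = \<bar>f (u s)\<bar> * \<bar>g s\<bar>" for s
  have wi': "w integrable_on {0..L}" using wi unfolding w_def .
  have w0: "0 \<le> w s" for s unfolding w_def by simp
  define B where "B = integral {0..L} w"
  define H where "H q = integral {0..q} w" for q
  have Hdiff: "H q - H p = integral {p..q} w" if "0 \<le> p" "p \<le> q" "q \<le> L" for p q
  proof -
    have "w integrable_on {0..q}" by (rule integrable_on_subinterval[OF wi']) (use that in auto)
    from Henstock_Kurzweil_Integration.integral_combine[OF that(1,2) this] show ?thesis unfolding H_def by simp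
  qed
  have wint: "w integrable_on {p..q}" if "0 \<le> p" "q \<le> L" for p q
    by (rule integrable_on_subinterval[OF wi']) (use that in auto)
  have Hmono: "H p \<le> H q" if "0 \<le> p" "p \<le> q" "q \<le> L" for p q
    using Hdiff[OF that] integral_nonneg[OF wint[of p q] w0] that by simp
  have H0: "0 \<le> H q" if "0 \<le> q" "q \<le> L" for q unfolding H_def by (rule integral_nonneg[OF wint]) (use that w0 in auto)
  have HL: "H L = B" unfolding H_def B_def ..
  have "\<forall>Z. eventually (\<lambda>\<epsilon>. Z < integral {\<epsilon>..c} f) (at_right 0)"
    using dv c by (auto simp: filterlim_at_top_dense)
  then have "eventually (\<lambda>\<epsilon>. B + 2 < integral {\<epsilon>..c} f) (at_right 0)" by blast
  then obtain b0 where b0: "b0 > 0" "\<And>\<epsilon>. 0 < \<epsilon> \<Longrightarrow> \<epsilon> < b0 \<Longrightarrow> B + 2 < integral {\<epsilon>..c} f"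
    unfolding eventually_at_right_field by auto
  define \<epsilon> where "\<epsilon> = min (b0/2) (c/2)"
  have eps: "0 < \<epsilon>" "\<epsilon> < c" "B + 2 < integral {\<epsilon>..c} f"
    using b0 c unfolding \<epsilon>_def by auto
  have fcI: "continuous_on {\<epsilon>..c} f" by (rule continuous_on_subset[OF fc]) (use eps in auto)
  have "uniformly_continuous_on {\<epsilon>..c} f" by (rule compact_uniformly_continuous[OF fcI compact_Icc])
  then obtain d where d: "d > 0" "\<And>s t. s \<in> {\<epsilon>..c} \<Longrightarrow> t \<in> {\<epsilon>..c} \<Longrightarrow> \<bar>s - t\<bar> < d \<Longrightarrow> \<bar>f s - f t\<bar> < 1"
    unfolding uniformly_continuous_on_def dist_real_def by (metis zero_less_one)
  obtain n :: nat where n: "(c - \<epsilon>)/d < real n" using reals_Archimedean2 by blast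
  have npos: "real n > 0" using n eps d by (smt (verit) divide_pos_pos)
  define h where "h = (c - \<epsilon>) / real n"
  have h: "h > 0" "h < d" "real n * h = c - \<epsilon>"
    using n npos eps d unfolding h_def by (auto simp: field_simps)
  define s where "s k = \<epsilon> + real k * h" for k :: nat
  have sI: "s k \<in> {\<epsilon>..c}" if "k \<le> n" for k
  proof -
    have "real k * h \<le> real n * h" using that h by (intro mult_right_mono) auto
    then show ?thesis using h unfolding s_def by auto
  qed
  have sn: "s n = c" unfolding s_def using h by simp
  have ucx: "continuous_on {0..x0} u" by (rule continuous_on_subset[OF uc]) (use x0L in auto)
  define \<tau> where "\<tau> t = Inf {z \<in> {0..x0}. u z = t}" for t
  have tau: "\<tau> t \<in> {0..x0}" if "0 < t" "t \<le> c" for t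
    using tau_lemma(1)[OF ucx _ u0, of t] that c x0L unfolding \<tau>_def by auto
  have step: "integral {s k..s (Suc k)} f - 2*h \<le> H (\<tau> (s (Suc k))) - H (\<tau> (s k))" if k: "k < n" for k
  proof -
    define a where "a = s k"
    define b where "b = s (Suc k)"
    have ab: "\<epsilon> \<le> a" "a < b" "b \<le> c" "b - a = h"
      using sI[of k] sI[of "Suc k"] k h unfolding a_def b_def s_def by (auto simp: algebra_simps)
    have fab: "f t \<le> f a + 1" if "t \<in> {a..b}" for t
      using d(2)[of t a] that ab h by auto
    have fint: "f integrable_on {a..b}"
      by (rule integrable_continuous_interval, rule continuous_on_subset[OF fcI]) (use ab in auto)
    have "integral {a..b} f \<le> integral {a..b} (\<lambda>_. f a + 1)"
      by (rule integral_le[OF fint]) (use fab in auto)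
    also have "\<dots> = h * (f a + 1)" using ab by simp
    finally have I1: "integral {a..b} f \<le> h * (f a + 1)" .
    obtain p where p: "\<tau> a \<le> p" "0 < p" "p < \<tau> b" "u p = a"
      "\<And>z. p \<le> z \<Longrightarrow> z \<le> \<tau> b \<Longrightarrow> a \<le> u z \<and> u z \<le> b"
      using p_lemma[OF ucx _ u0, of a b] ab eps x0L c unfolding \<tau>_def by auto
    have tb: "\<tau> b \<in> {0..x0}" "u (\<tau> b) = b"
      using tau[of b] tau_lemma(2)[OF ucx _ u0, of b] ab eps c x0L unfolding \<tau>_def by auto
    have ta: "\<tau> a \<in> {0..x0}" using tau[of a] ab eps by auto
    define m where "m = f a - 1"
    have m: "0 \<le> m" using c(4)[of a] ab eps unfolding m_def by auto
    have wz: "m * \<bar>g z\<bar> \<le> w z" if "z \<in> {p..\<tau> b}" for z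
    proof -
      have uz: "a \<le> u z" "u z \<le> b" using p(5)[of z] that by auto
      then have "\<bar>f (u z) - f a\<bar> < 1" using d(2)[of "u z" a] ab h by auto
      then have "m \<le> \<bar>f (u z)\<bar>" unfolding m_def by linarith
      then show ?thesis unfolding w_def by (rule mult_right_mono) simp
    qed
    have gint: "(\<lambda>z. \<bar>g z\<bar>) integrable_on {p..\<tau> b}"
      by (rule integrable_on_subinterval[OF gi]) (use p tb x0L in auto)
    have "m * h = m * (u (\<tau> b) - u p)" using tb p ab by simp
    also have "\<dots> \<le> m * integral {p..\<tau> b} (\<lambda>z. \<bar>g z\<bar>)"
      using AC[of p "\<tau> b"] p tb x0L m by (intro mult_left_mono) auto
    also have "\<dots> = integral {p..\<tau> b} (\<lambda>z. m * \<bar>g z\<bar>)" by simp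
    also have "\<dots> \<le> integral {p..\<tau> b} w"
      by (rule integral_le) (use integrable_on_cmult_left[OF gint, of m] wint[of p "\<tau> b"] p tb x0L wz in auto)
    also have "\<dots> = H (\<tau> b) - H p" using Hdiff[of p "\<tau> b"] p tb x0L by auto
    also have "\<dots> \<le> H (\<tau> b) - H (\<tau> a)" using Hmono[of "\<tau> a" p] ta p x0L tb by auto
    finally have "m * h \<le> H (\<tau> b) - H (\<tau> a)" .
    moreover have "integral {a..b} f - 2*h \<le> m * h" using I1 unfolding m_def by (simp add: algebra_simps)
    ultimately show ?thesis unfolding a_def b_def by linarith
  qed
  have ind: "k \<le> n \<Longrightarrow> integral {\<epsilon>..s k} f - 2 * (real k * h) \<le> H (\<tau> (s k)) - H (\<tau> \<epsilon>)" for k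
  proof (induction k)
    case 0
    then show ?case unfolding s_def by simp
  next
    case (Suc k)
    have fint: "f integrable_on {\<epsilon>..s (Suc k)}"
      by (rule integrable_continuous_interval, rule continuous_on_subset[OF fcI]) (use sI[OF Suc.prems] in auto)
    have "integral {\<epsilon>..s (Suc k)} f = integral {\<epsilon>..s k} f + integral {s k..s (Suc k)} f"
      by (rule Henstock_Kurzweil_Integration.integral_combine[symmetric, OF _ _ fint])
         (use sI[of k] Suc.prems h in \<open>auto simp: s_def\<close>)
    then show ?case using Suc.IH Suc.prems step[of k] by (auto simp: algebra_simps)
  qed
  have "integral {\<epsilon>..c} f - 2 * (c - \<epsilon>) \<le> H (\<tau> c) - H (\<tau> \<epsilon>)"
    using ind[of n] sn h by simp
  also have "\<dots> \<le> B"
    using Hmono[of "\<tau> c" L] tau[of c] tau[of \<epsilon>] eps c x0L H0[of "\<tau> \<epsilon>"] HL by auto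
  finally have "integral {\<epsilon>..c} f - 2 * (c - \<epsilon>) \<le> B" .
  then show False using eps(1-3) c(1,2) by argo
qed




lemma phi_facts:
  fixes \<phi> :: "real \<Rightarrow> ereal"
  assumes H: "H_phi \<phi>" and p0: "\<phi> 0 = \<infinity>"
  shows "\<And>t. t \<noteq> 0 \<Longrightarrow> isCont (\<lambda>t. real_of_ereal (\<phi> t)) t"
    "\<exists>c>0. \<forall>t. 0 < \<bar>t\<bar> \<and> \<bar>t\<bar> \<le> c \<longrightarrow> 1 \<le> real_of_ereal (\<phi> t)"
proof -
  have pc: "isCont \<phi> t" for t using H unfolding H_phi_def
    by (simp add: continuous_on_eq_continuous_at)
  fix t :: real assume "t \<noteq> 0"
  then have "\<bar>\<phi> t\<bar> \<noteq> \<infinity>" using H unfolding H_phi_def by auto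
  then show "isCont (\<lambda>t. real_of_ereal (\<phi> t)) t"
    by (rule isCont_o2[OF pc continuous_at_of_ereal])
next
  have pc: "isCont \<phi> 0" using H unfolding H_phi_def
    by (simp add: continuous_on_eq_continuous_at)
  then have "(\<phi> \<longlongrightarrow> \<infinity>) (at 0)" using p0 by (simp add: isCont_def)
  then have "eventually (\<lambda>t. 2 < \<phi> t) (at 0)" by (rule order_tendstoD) simp
  then obtain d where d: "d > 0" "\<And>t. t \<noteq> 0 \<Longrightarrow> dist t 0 < d \<Longrightarrow> 2 < \<phi> t"
    unfolding eventually_at by auto
  show "\<exists>c>0. \<forall>t. 0 < \<bar>t\<bar> \<and> \<bar>t\<bar> \<le> c \<longrightarrow> 1 \<le> real_of_ereal (\<phi> t)"
  proof (intro exI[of _ "d/2"] conjI allI impI)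
    show "0 < d/2" using d by simp
    fix t :: real assume t: "0 < \<bar>t\<bar> \<and> \<bar>t\<bar> \<le> d/2"
    then have "2 < \<phi> t" using d by auto
    moreover have "\<phi> t < \<infinity>" using H t unfolding H_phi_def by auto
    ultimately show "1 \<le> real_of_ereal (\<phi> t)"
      by (cases "\<phi> t") auto
  qed
qed

theorem mainTheorem7:
  fixes L :: real and \<phi> :: "real \<Rightarrow> ereal" and u :: "real \<Rightarrow> real"
  assumes "L > 0" and "H_phi \<phi>" and "\<phi> 0 = \<infinity>"
    and "H1_0 L u" and "comp_L2 L \<phi> u"
  shows "((\<forall>\<delta>\<in>{0<..<1}. filterlim (\<lambda>\<epsilon>. integral {\<epsilon>..\<delta>} (\<lambda>t. real_of_ereal (\<phi> t))) at_top (at_right 0))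
           \<longrightarrow> (\<forall>x\<in>{0..L}. u x \<le> 0))
       \<and> ((\<forall>\<delta>\<in>{0<..<1}. filterlim (\<lambda>\<epsilon>. integral {-\<delta>..-\<epsilon>} (\<lambda>t. real_of_ereal (\<phi> t))) at_top (at_right 0))
           \<longrightarrow> (\<forall>x\<in>{0..L}. u x \<ge> 0))"
proof -
  define f where "f t = real_of_ereal (\<phi> t)" for t
  have uc: "continuous_on {0..L} u" and u0: "u 0 = 0" and uL: "u L = 0"
    using assms(4) unfolding H1_0_def by auto
  obtain g where gL2: "L2_on L g" and weak: "\<And>\<psi> \<psi>'. C1c_test L \<psi> \<psi>' \<Longrightarrow>
         (LINT x:{0<..<L}|lborel. u x * \<psi>' x) = - (LINT x:{0<..<L}|lborel. g x * \<psi> x)"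
    using assms(4) unfolding H1_0_def H1_on_def by blast
  have AC: "\<bar>u y - u x\<bar> \<le> integral {x..y} (\<lambda>s. \<bar>g s\<bar>)" if "0 < x" "x < y" "y < L" for x y
    by (rule AC[OF assms(1) uc gL2 weak that])
  have gi: "(\<lambda>s. \<bar>g s\<bar>) integrable_on {0..L}"
    using setint_HK(1)[OF set_integrable_abs[OF L2_int[OF gL2]]] .
  have fL2: "L2_on L (\<lambda>x. f (u x))" using assms(5) unfolding comp_L2_def f_def by simp
  have wi: "(\<lambda>s. \<bar>f (u s)\<bar> * \<bar>g s\<bar>) integrable_on {0..L}"
    using setint_HK(1)[OF set_integrable_abs[OF L2_mult[OF fL2 gL2]]] by (simp add: abs_mult)
  have fcont: "isCont f t" if "t \<noteq> 0" for t
    using phi_facts(1)[OF assms(2,3) that] unfolding f_def .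
  obtain c where c: "c > 0" "\<And>t. 0 < \<bar>t\<bar> \<Longrightarrow> \<bar>t\<bar> \<le> c \<Longrightarrow> 1 \<le> f t"
    using phi_facts(2)[OF assms(2,3)] unfolding f_def by blast
  show ?thesis
  proof (intro conjI impI ballI)
    fix x assume dv: "\<forall>\<delta>\<in>{0<..<1}. filterlim (\<lambda>\<epsilon>. integral {\<epsilon>..\<delta>} (\<lambda>t. real_of_ereal (\<phi> t))) at_top (at_right 0)"
      and x: "x \<in> {0..L}"
    show "u x \<le> 0"
    proof (rule core[OF assms(1) uc u0 uL _ gi wi _ _ _ x])
      show "u y - u x \<le> integral {x..y} (\<lambda>s. \<bar>g s\<bar>)" if "0 < x" "x < y" "y < L" for x y
        using AC[OF that] by linarith
      show "continuous_on {0<..} f"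
        by (rule continuous_at_imp_continuous_on) (use fcont in auto)
      show "\<exists>c>0. \<forall>t. 0 < t \<and> t \<le> c \<longrightarrow> 1 \<le> f t" using c by (intro exI[of _ c]) auto
      show "\<forall>\<delta>\<in>{0<..<1}. filterlim (\<lambda>\<epsilon>. integral {\<epsilon>..\<delta>} f) at_top (at_right 0)"
        using dv unfolding f_def .
    qed
  next
    fix x assume dv: "\<forall>\<delta>\<in>{0<..<1}. filterlim (\<lambda>\<epsilon>. integral {-\<delta>..-\<epsilon>} (\<lambda>t. real_of_ereal (\<phi> t))) at_top (at_right 0)"
      and x: "x \<in> {0..L}"
    have "(\<lambda>x. - u x) x \<le> 0"
    proof (rule core[where f="\<lambda>t. f (-t)" and g=g, OF assms(1) _ _ _ _ gi _ _ _ _ x])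
      show "continuous_on {0..L} (\<lambda>x. - u x)" by (intro continuous_intros uc)
      show "- u 0 = 0" "- u L = 0" using u0 uL by auto
      show "(- u y) - (- u x) \<le> integral {x..y} (\<lambda>s. \<bar>g s\<bar>)" if "0 < x" "x < y" "y < L" for x y
        using AC[OF that] by linarith
      show "(\<lambda>s. \<bar>f (- (- u s))\<bar> * \<bar>g s\<bar>) integrable_on {0..L}" using wi by simp
      show "continuous_on {0<..} (\<lambda>t. f (-t))"
      proof (rule continuous_at_imp_continuous_on, rule ballI)
        fix t :: real assume "t \<in> {0<..}"
        have "isCont (\<lambda>t. - t) t" by (intro continuous_intros)
        moreover have "isCont f (- t)" using \<open>t \<in> {0<..}\<close> by (intro fcont) auto
        ultimately show "isCont (\<lambda>t. f (- t)) t" by (rule isCont_o2)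
      qed
      show "\<exists>c>0. \<forall>t. 0 < t \<and> t \<le> c \<longrightarrow> 1 \<le> f (- t)" using c by (intro exI[of _ c]) auto
      show "\<forall>\<delta>\<in>{0<..<1}. filterlim (\<lambda>\<epsilon>. integral {\<epsilon>..\<delta>} (\<lambda>t. f (- t))) at_top (at_right 0)"
      proof
        fix \<delta> :: real assume "\<delta> \<in> {0<..<1}"
        have "(\<lambda>\<epsilon>. integral {\<epsilon>..\<delta>} (\<lambda>t. f (- t))) = (\<lambda>\<epsilon>. integral {-\<delta>..-\<epsilon>} f)"
          using Henstock_Kurzweil_Integration.integral_reflect_real[of "-\<epsilon>" "-\<delta>" f for \<epsilon>] by (auto simp: fun_eq_iff)
        then show "filterlim (\<lambda>\<epsilon>. integral {\<epsilon>..\<delta>} (\<lambda>t. f (- t))) at_top (at_right 0)"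
          using dv \<open>\<delta> \<in> {0<..<1}\<close> unfolding f_def by simp
      qed
    qed
    then show "u x \<ge> 0" by simp
  qed
qed


end
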